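(* Let Problem A be \[ \min_{d,\{t_n\},\{E_n\}}\ \sum_{n=1}^N E_n\left(1+\frac{h_n}{g_n}\right)+\frac{\kappa L^3(D-d)^3}{T^2} \] subject to \[ d\le \sum_{n=1}^N t_nW\ln\left(1+\frac{E_nh_n}{t_n\sigma^2W}\right),\qquad 2\sum_{n=1}^N t_n\le T-\frac{Ld}{f_B},\qquad 0\le d\le D,\quad E_n\ge0,\ t_n\ge0\ \ \forall n. \] Let Problem B be \[ \min_{d,t,\{P_n\},\{w_n\}}\ \sum_{n=1}^N P_nt\left(1+\frac{h_n}{g_n}\right)+\frac{\kappa L^3(D-d)^3}{T^2} \] subject to \[ d\le \sum_{n=1}^N tw_n\ln\left(1+\frac{P_nh_n}{\sigma^2w_n}\right),\qquad 2t\le T-\frac{Ld}{f_B},\qquad \sum_{n=1}^N w_n\le W, \] \[ 0\le d\le D,\quad t\ge0,\quad P_n\ge0,\ w_n\ge 0\ \ \forall n. \] Then Problem A and Problem B are mathematically equivalent. In particular, both can be reformulated as the same optimization problem: \[ \min_{d,\{r_n\},\{E_n\}}\ \sum_{n=1}^N E_n\left(1+\frac{h_n}{g_n}\right)+\frac{\kappa L^3(D-d)^3}{T^2} \] subject to \[ d=\sum_{n=1}^N r_n\ln\left(1+\frac{E_nh_n}{\sigma^2 r_n}\right),\qquad 2\sum_{n=1}^N r_n=W\left(T-\frac{Ld}{f_B}\right),\qquad 0\le d\le D,\ E_n,r_n\ge 0. \] For Problem A this reformulation uses $r_n=t_nW$; for Problem B it uses $E_n=P_nt$ and $r_n=w_nt$.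 Consequently, the two problems have the same minimal objective value.
   Context: All parameters $N, h_n, g_n, W, \sigma^2, \kappa, L, D, T, f_B$ are given positive constants, and $n$ ranges over $\{1,\dots,N\}$. Terms of the form $x\ln(1+y/x)$ are interpreted as $0$ when $x=0$. *)

theory Defs
  imports Complex_Main
begin

text \<open>Convention: x ln(1 + y/x) is interpreted as 0 when x = 0.\<close>
definition xlog :: "real \<Rightarrow> real \<Rightarrow> real" where
  "xlog x y = (if x = 0 then 0 else x * ln (1 + y / x))"

definition feasA ::
  "nat \<Rightarrow> (nat \<Rightarrow> real) \<Rightarrow> real \<Rightarrow> real \<Rightarrow> real \<Rightarrow> real \<Rightarrow> real \<Rightarrow> real \<Rightarrow>
   real \<Rightarrow> (nat \<Rightarrow> real) \<Rightarrow> (nat \<Rightarrow> real) \<Rightarrow> bool" where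
  "feasA N h W \<sigma>2 L D T fB d t E \<longleftrightarrow>
     d \<le> (\<Sum>n=1..N. xlog (t n * W) (E n * h n / \<sigma>2)) \<and>
     2 * (\<Sum>n=1..N. t n) \<le> T - L * d / fB \<and>
     0 \<le> d \<and> d \<le> D \<and> (\<forall>n\<in>{1..N}. E n \<ge> 0 \<and> t n \<ge> 0)"

definition objA ::
  "nat \<Rightarrow> (nat \<Rightarrow> real) \<Rightarrow> (nat \<Rightarrow> real) \<Rightarrow> real \<Rightarrow> real \<Rightarrow> real \<Rightarrow> real \<Rightarrow>
   real \<Rightarrow> (nat \<Rightarrow> real) \<Rightarrow> real" where
  "objA N h g \<kappa> L D T d E =
     (\<Sum>n=1..N. E n * (1 + h n / g n)) + \<kappa> * L ^ 3 * (D - d) ^ 3 / T ^ 2"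

definition valA where
  "valA N h g W \<sigma>2 \<kappa> L D T fB =
     Inf {objA N h g \<kappa> L D T d E | d t E. feasA N h W \<sigma>2 L D T fB d t E}"

definition feasB ::
  "nat \<Rightarrow> (nat \<Rightarrow> real) \<Rightarrow> real \<Rightarrow> real \<Rightarrow> real \<Rightarrow> real \<Rightarrow> real \<Rightarrow> real \<Rightarrow>
   real \<Rightarrow> real \<Rightarrow> (nat \<Rightarrow> real) \<Rightarrow> (nat \<Rightarrow> real) \<Rightarrow> bool" where
  "feasB N h W \<sigma>2 L D T fB d t P w \<longleftrightarrow>
     d \<le> (\<Sum>n=1..N. t * xlog (w n) (P n * h n / \<sigma>2)) \<and>
     2 * t \<le> T - L * d / fB \<and>
     (\<Sum>n=1..N. w n) \<le> W \<and>
     0 \<le> d \<and> d \<le> D \<and> t \<ge> 0 \<and> (\<forall>n\<in>{1..N}. P n \<ge> 0 \<and> w n \<ge> 0)"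

definition objB ::
  "nat \<Rightarrow> (nat \<Rightarrow> real) \<Rightarrow> (nat \<Rightarrow> real) \<Rightarrow> real \<Rightarrow> real \<Rightarrow> real \<Rightarrow> real \<Rightarrow>
   real \<Rightarrow> real \<Rightarrow> (nat \<Rightarrow> real) \<Rightarrow> real" where
  "objB N h g \<kappa> L D T d t P =
     (\<Sum>n=1..N. P n * t * (1 + h n / g n)) + \<kappa> * L ^ 3 * (D - d) ^ 3 / T ^ 2"

definition valB where
  "valB N h g W \<sigma>2 \<kappa> L D T fB =
     Inf {objB N h g \<kappa> L D T d t P | d t P w. feasB N h W \<sigma>2 L D T fB d t P w}"

definition feasC ::
  "nat \<Rightarrow> (nat \<Rightarrow> real) \<Rightarrow> real \<Rightarrow> real \<Rightarrow> real \<Rightarrow> real \<Rightarrow> real \<Rightarrow> real \<Rightarrow>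
   real \<Rightarrow> (nat \<Rightarrow> real) \<Rightarrow> (nat \<Rightarrow> real) \<Rightarrow> bool" where
  "feasC N h W \<sigma>2 L D T fB d r E \<longleftrightarrow>
     d = (\<Sum>n=1..N. xlog (r n) (E n * h n / \<sigma>2)) \<and>
     2 * (\<Sum>n=1..N. r n) = W * (T - L * d / fB) \<and>
     0 \<le> d \<and> d \<le> D \<and> (\<forall>n\<in>{1..N}. E n \<ge> 0 \<and> r n \<ge> 0)"

definition valC where
  "valC N h g W \<sigma>2 \<kappa> L D T fB =
     Inf {objA N h g \<kappa> L D T d E | d r E. feasC N h W \<sigma>2 L D T fB d r E}"

end

theory Submission imports Defs "HOL-Analysis.Analysis" begin

lemma xlog_zero2[simp]: "xlog r 0 = 0" by (simp add: xlog_def)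

lemma xlog_nonneg: assumes "r \<ge> 0" "y \<ge> 0" shows "xlog r y \<ge> 0"
  using assms by (auto simp: xlog_def)

lemma xlog_mono: assumes "0 \<le> r1" "r1 \<le> r2" "y \<ge> 0" shows "xlog r1 y \<le> xlog r2 y"
proof (cases "r1 = 0")
  case True thus ?thesis using xlog_nonneg[of r2 y] assms by (simp add: xlog_def)
next
  case False
  hence r1: "r1 > 0" using assms by simp
  hence r2: "r2 > 0" using assms by simp
  define \<alpha> where "\<alpha> = r1 / r2"
  have a0: "0 \<le> \<alpha>" "\<alpha> \<le> 1" using r1 r2 assms by (auto simp: \<alpha>_def)
  have "\<alpha> * ln (1 + y/r1) + (1-\<alpha>) * ln 1 \<le> ln (\<alpha> * (1 + y/r1) + (1-\<alpha>) * 1)"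
  proof -
    have "concave_on {0<..} ln" by (rule ln_concave)
    hence C: "\<forall>x\<in>{0<..}. \<forall>y\<in>{0<..}. \<forall>u\<ge>0. \<forall>v\<ge>0. u + v = 1 \<longrightarrow> ln (u *\<^sub>R x + v *\<^sub>R y) \<ge> u * ln x + v * ln y"
      unfolding concave_on_iff by blast
    have P: "(1 + y/r1) \<in> {0<..}" using r1 assms by (simp add: add_pos_nonneg)
    note * = C[rule_format, of "1 + y/r1" 1 \<alpha> "1-\<alpha>"]
    have "\<alpha> * ln (1 + y/r1) + (1-\<alpha>) * ln 1 \<le> ln (\<alpha> *\<^sub>R (1 + y/r1) + (1-\<alpha>) *\<^sub>R 1)"
      using a0 P by (intro *) auto
    thus ?thesis by simp
  qed
  moreover have "\<alpha> * (1 + y/r1) + (1-\<alpha>) * 1 = 1 + y/r2"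
    using r1 r2 by (simp add: \<alpha>_def field_simps)
  ultimately have "\<alpha> * ln (1 + y/r1) \<le> ln (1 + y/r2)" by (metis mult_1_right ln_one mult_zero_right add_0_right)
  hence "r2 * (\<alpha> * ln (1 + y/r1)) \<le> r2 * ln (1 + y/r2)" using r2 by simp
  moreover have "r2 * (\<alpha> * ln (1 + y/r1)) = r1 * ln (1 + y/r1)" using r2 by (simp add: \<alpha>_def)
  ultimately show ?thesis using r1 r2 by (simp add: xlog_def)
qed

lemma xlog_scale: assumes "t \<ge> 0" shows "t * xlog w y = xlog (t*w) (t*y)"
  using assms by (cases "t = 0"; cases "w = 0") (auto simp: xlog_def)


lemma adjust:
  fixes N :: nat and h g r E :: "nat \<Rightarrow> real" and W \<sigma>2 \<kappa> L D T fB d :: real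
  assumes N: "N > 0" and hg: "\<forall>n\<in>{1..N}. h n > 0 \<and> g n > 0"
    and W: "W > 0" and s2: "\<sigma>2 > 0"
    and c1: "d \<le> (\<Sum>n=1..N. xlog (r n) (E n * h n / \<sigma>2))"
    and c2: "2 * (\<Sum>n=1..N. r n) \<le> W * (T - L * d / fB)"
    and d0: "0 \<le> d" and dD: "d \<le> D"
    and nn: "\<forall>n\<in>{1..N}. E n \<ge> 0 \<and> r n \<ge> 0"
  shows "\<exists>r' E'. feasC N h W \<sigma>2 L D T fB d r' E' \<and> objA N h g \<kappa> L D T d E' \<le> objA N h g \<kappa> L D T d E"
proof -
  define s where "s = (W * (T - L * d / fB) - 2 * (\<Sum>n=1..N. r n)) / 2"
  have s0: "s \<ge> 0" using c2 by (simp add: s_def)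
  define r' where "r' n = r n + (if n = 1 then s else 0)" for n
  have "(\<Sum>n=1..N. r' n) = (\<Sum>n=1..N. r n) + (\<Sum>n=1..N. (if n = 1 then s else 0))"
    by (simp add: r'_def sum.distrib)
  also have "(\<Sum>n=1..N. (if n = 1 then s else 0)) = s" using N
    by (simp add: sum.delta'[of "{1..N}" 1 "\<lambda>_. s", simplified] )
  finally have sr': "2 * (\<Sum>n=1..N. r' n) = W * (T - L * d / fB)" unfolding s_def by (simp add: field_simps)
  have r'nn: "\<forall>n\<in>{1..N}. r' n \<ge> 0" using nn s0 by (simp add: r'_def)
  have yn: "E n * h n / \<sigma>2 \<ge> 0" if "n \<in> {1..N}" for n
    using nn hg s2 that by (intro divide_nonneg_pos mult_nonneg_nonneg) (auto simp: less_imp_le)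
  define \<phi> where "\<phi> c = (\<Sum>n=1..N. xlog (r' n) (c * (E n * h n / \<sigma>2)))" for c
  have "\<phi> 0 = 0" by (simp add: \<phi>_def)
  hence p0: "\<phi> 0 \<le> d" using d0 by simp
  have "d \<le> (\<Sum>n=1..N. xlog (r' n) (E n * h n / \<sigma>2))"
    using c1 by (rule order_trans)
      (intro sum_mono xlog_mono, use nn s0 yn in \<open>auto simp: r'_def\<close>)
  hence p1: "d \<le> \<phi> 1" by (simp add: \<phi>_def)
  have cont: "continuous_on {0..1} \<phi>"
    unfolding \<phi>_def
  proof (intro continuous_on_sum)
    fix n assume n: "n \<in> {1..N}"
    show "continuous_on {0..1} (\<lambda>c. xlog (r' n) (c * (E n * h n / \<sigma>2)))"
    proof (cases "r' n = 0")
      case True thus ?thesis by (simp add: xlog_def)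
    next
      case False
      hence rp: "r' n > 0" using r'nn n by force
      have "continuous_on {0..1} (\<lambda>c. r' n * ln (1 + c * (E n * h n / \<sigma>2) / r' n))"
      proof (intro continuous_intros ballI)
        fix x :: real assume "x \<in> {0..1}"
        hence "x * (E n * h n / \<sigma>2) / r' n \<ge> 0" using rp yn[OF n] nn hg s2 n
          by (intro divide_nonneg_pos mult_nonneg_nonneg) (auto simp: less_imp_le)
        thus "1 + x * (E n * h n / \<sigma>2) / r' n \<noteq> 0" by linarith
      qed (use rp in auto)
      thus ?thesis using False by (simp add: xlog_def)
    qed
  qed
  obtain c where l: "0 \<le> c" "c \<le> 1" "\<phi> c = d"
    using IVT'[of \<phi> 0 d 1, OF p0 p1 _ cont] by auto
  define E' where "E' n = c * E n" for n
  have "feasC N h W \<sigma>2 L D T fB d r' E'"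
    unfolding feasC_def
  proof (intro conjI)
    show "d = (\<Sum>n=1..N. xlog (r' n) (E' n * h n / \<sigma>2))"
      using l(3) by (simp add: \<phi>_def E'_def mult.assoc)
    show "\<forall>n\<in>{1..N}. 0 \<le> E' n \<and> 0 \<le> r' n" using nn r'nn l by (simp add: E'_def)
  qed (use sr' d0 dD in auto)
  moreover have "objA N h g \<kappa> L D T d E' \<le> objA N h g \<kappa> L D T d E"
    unfolding objA_def
  proof -
    have "(\<Sum>n=1..N. E' n * (1 + h n / g n)) \<le> (\<Sum>n=1..N. E n * (1 + h n / g n))"
    proof (intro sum_mono mult_right_mono)
      fix n assume n: "n \<in> {1..N}"
      show "E' n \<le> E n" using nn n l by (simp add: E'_def mult_left_le_one_le)
      show "0 \<le> 1 + h n / g n" using hg n by (simp add: add_nonneg_nonneg less_imp_le)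
    qed
    thus "(\<Sum>n=1..N. E' n * (1 + h n / g n)) + \<kappa> * L ^ 3 * (D - d) ^ 3 / T ^ 2
      \<le> (\<Sum>n=1..N. E n * (1 + h n / g n)) + \<kappa> * L ^ 3 * (D - d) ^ 3 / T ^ 2" by simp
  qed
  ultimately show ?thesis by blast
qed


lemma Inf_dom_eq:
  fixes S U :: "real set"
  assumes "S \<noteq> {}" "U \<noteq> {}" "\<forall>x\<in>S. 0 \<le> x" "\<forall>y\<in>U. 0 \<le> y"
    and "\<forall>x\<in>S. \<exists>y\<in>U. y \<le> x" and "\<forall>y\<in>U. \<exists>x\<in>S. x \<le> y"
  shows "Inf S = Inf U"
proof (rule antisym)
  have bS: "bdd_below S" using assms(3) by (auto intro: bdd_belowI)
  have bU: "bdd_below U" using assms(4) by (auto intro: bdd_belowI)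
  show "Inf S \<le> Inf U"
  proof (rule cInf_greatest[OF assms(2)])
    fix y assume "y \<in> U"
    then obtain x where "x \<in> S" "x \<le> y" using assms(6) by blast
    thus "Inf S \<le> y" using cInf_lower[OF _ bS] by fastforce
  qed
  show "Inf U \<le> Inf S"
  proof (rule cInf_greatest[OF assms(1)])
    fix x assume "x \<in> S"
    then obtain y where "y \<in> U" "y \<le> x" using assms(5) by blast
    thus "Inf U \<le> x" using cInf_lower[OF _ bU] by fastforce
  qed
qed

theorem lemma6:
  fixes N :: nat and h g :: "nat \<Rightarrow> real" and W \<sigma>2 \<kappa> L D T fB :: real
  assumes "N > 0" and "\<forall>n\<in>{1..N}. h n > 0 \<and> g n > 0"
    and "W > 0" and "\<sigma>2 > 0" and "\<kappa> > 0" and "L > 0" and "D > 0" and "T > 0" and "fB > 0"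
  shows "valA N h g W \<sigma>2 \<kappa> L D T fB = valC N h g W \<sigma>2 \<kappa> L D T fB \<and>
         valB N h g W \<sigma>2 \<kappa> L D T fB = valC N h g W \<sigma>2 \<kappa> L D T fB \<and>
         valA N h g W \<sigma>2 \<kappa> L D T fB = valB N h g W \<sigma>2 \<kappa> L D T fB"
proof -
  note N = assms(1) and hg = assms(2) and W = assms(3) and s2 = assms(4) and k = assms(5)
    and L = assms(6) and D = assms(7) and T = assms(8) and fB = assms(9)
  define SA where "SA = {objA N h g \<kappa> L D T d E | d t E. feasA N h W \<sigma>2 L D T fB d t E}"
  define SB where "SB = {objB N h g \<kappa> L D T d t P | d t P w. feasB N h W \<sigma>2 L D T fB d t P w}"
  define SC where "SC = {objA N h g \<kappa> L D T d E | d r E. feasC N h W \<sigma>2 L D T fB d r E}"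
  have tail: "0 \<le> \<kappa> * L ^ 3 * (D - d) ^ 3 / T ^ 2" if "d \<le> D" for d
    using that k L T by simp
  have objA_nn: "0 \<le> objA N h g \<kappa> L D T d E" if "d \<le> D" "\<forall>n\<in>{1..N}. E n \<ge> 0" for d E
  proof -
    have "0 \<le> (\<Sum>n=1..N. E n * (1 + h n / g n))"
      using that hg by (intro sum_nonneg mult_nonneg_nonneg) (auto simp: less_imp_le add_nonneg_nonneg)
    thus ?thesis using tail[OF that(1)] unfolding objA_def by linarith
  qed
  have objAB: "objB N h g \<kappa> L D T d t P = objA N h g \<kappa> L D T d (\<lambda>n. P n * t)" for d t P
    by (simp add: objA_def objB_def)
  have CA: "\<exists>t. feasA N h W \<sigma>2 L D T fB d t E" if "feasC N h W \<sigma>2 L D T fB d r E" for d r E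
  proof -
    have "feasA N h W \<sigma>2 L D T fB d (\<lambda>n. r n / W) E"
      using that W unfolding feasA_def feasC_def by (auto simp: sum_divide_distrib[symmetric])
    thus ?thesis by blast
  qed
  have AC: "\<exists>r' E'. feasC N h W \<sigma>2 L D T fB d r' E' \<and> objA N h g \<kappa> L D T d E' \<le> objA N h g \<kappa> L D T d E"
    if "feasA N h W \<sigma>2 L D T fB d t E" for d t E
  proof (rule adjust[OF N hg W s2, of d "\<lambda>n. t n * W"])
    show "d \<le> (\<Sum>n=1..N. xlog (t n * W) (E n * h n / \<sigma>2))" using that by (simp add: feasA_def)
    have "2 * (\<Sum>n=1..N. t n) \<le> T - L * d / fB" using that by (simp add: feasA_def)
    hence "W * (2 * (\<Sum>n=1..N. t n)) \<le> W * (T - L * d / fB)" using W by simp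
    moreover have "2 * (\<Sum>n=1..N. t n * W) = W * (2 * (\<Sum>n=1..N. t n))"
      by (simp add: sum_distrib_left sum_distrib_right mult_ac)
    ultimately show "2 * (\<Sum>n=1..N. t n * W) \<le> W * (T - L * d / fB)" by simp
    show "0 \<le> d" "d \<le> D" using that by (auto simp: feasA_def)
    show "\<forall>n\<in>{1..N}. 0 \<le> E n \<and> 0 \<le> t n * W" using that W by (auto simp: feasA_def)
  qed
  have BC: "\<exists>r' E'. feasC N h W \<sigma>2 L D T fB d r' E' \<and> objA N h g \<kappa> L D T d E' \<le> objA N h g \<kappa> L D T d (\<lambda>n. P n * t)"
    if f: "feasB N h W \<sigma>2 L D T fB d t P w" for d t P w
  proof (rule adjust[OF N hg W s2, of d "\<lambda>n. t * w n"])
    have t0: "t \<ge> 0" using f by (simp add: feasB_def)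
    have "d \<le> (\<Sum>n=1..N. t * xlog (w n) (P n * h n / \<sigma>2))" using f by (simp add: feasB_def)
    also have "\<dots> = (\<Sum>n=1..N. xlog (t * w n) (P n * t * h n / \<sigma>2))"
      by (intro sum.cong refl) (simp add: xlog_scale[OF t0] mult_ac)
    finally show "d \<le> (\<Sum>n=1..N. xlog (t * w n) (P n * t * h n / \<sigma>2))" .
    have sw: "(\<Sum>n=1..N. w n) \<le> W" and tt: "2 * t \<le> T - L * d / fB" using f by (auto simp: feasB_def)
    have "2 * (\<Sum>n=1..N. t * w n) = 2 * t * (\<Sum>n=1..N. w n)" by (simp add: sum_distrib_left mult_ac)
    also have "\<dots> \<le> 2 * t * W" using sw t0 by (intro mult_left_mono) auto
    also have "\<dots> = W * (2 * t)" by simp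
    also have "\<dots> \<le> W * (T - L * d / fB)" using tt W by (intro mult_left_mono) auto
    finally show "2 * (\<Sum>n=1..N. t * w n) \<le> W * (T - L * d / fB)" .
    show "0 \<le> d" "d \<le> D" using f by (auto simp: feasB_def)
    show "\<forall>n\<in>{1..N}. 0 \<le> P n * t \<and> 0 \<le> t * w n" using f t0 by (auto simp: feasB_def)
  qed
  have CB: "\<exists>t P w. feasB N h W \<sigma>2 L D T fB d t P w \<and> objB N h g \<kappa> L D T d t P = objA N h g \<kappa> L D T d E"
    if f: "feasC N h W \<sigma>2 L D T fB d r E" for d r E
  proof -
    have rnn: "\<forall>n\<in>{1..N}. r n \<ge> 0" and Enn: "\<forall>n\<in>{1..N}. E n \<ge> 0"
      and dsum: "d = (\<Sum>n=1..N. xlog (r n) (E n * h n / \<sigma>2))"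
      and rsum: "2 * (\<Sum>n=1..N. r n) = W * (T - L * d / fB)"
      and d0: "0 \<le> d" and dD: "d \<le> D" using f by (auto simp: feasC_def)
    define t where "t = (\<Sum>n=1..N. r n) / W"
    have tpos: "t > 0"
    proof (rule ccontr)
      assume "\<not> t > 0"
      moreover have "t \<ge> 0" using rnn W unfolding t_def by (intro divide_nonneg_pos sum_nonneg) auto
      ultimately have "t = 0" by simp
      hence "(\<Sum>n=1..N. r n) = 0" using W by (simp add: t_def)
      hence "\<forall>n\<in>{1..N}. r n = 0" using rnn sum_nonneg_eq_0_iff[of "{1..N}" r] by simp
      hence "d = 0" using dsum by (simp add: xlog_def)
      thus False using rsum \<open>(\<Sum>n=1..N. r n) = 0\<close> W T by simp
    qed
    define w where "w n = r n / t" for n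
    define P where "P n = E n / t" for n
    have "feasB N h W \<sigma>2 L D T fB d t P w"
      unfolding feasB_def
    proof (intro conjI)
      have "d = (\<Sum>n=1..N. xlog (r n) (E n * h n / \<sigma>2))" by (rule dsum)
      also have "\<dots> = (\<Sum>n=1..N. t * xlog (w n) (P n * h n / \<sigma>2))"
        using tpos by (intro sum.cong refl) (simp add: xlog_scale w_def P_def)
      finally show "d \<le> (\<Sum>n=1..N. t * xlog (w n) (P n * h n / \<sigma>2))" by simp
      show "2 * t \<le> T - L * d / fB" using rsum W by (simp add: t_def field_simps)
      have "(\<Sum>n=1..N. w n) = (\<Sum>n=1..N. r n) / t" by (simp add: w_def sum_divide_distrib)
      also have "\<dots> = W" using tpos W unfolding t_def by (auto simp: field_simps)
      finally show "(\<Sum>n=1..N. w n) \<le> W" by simp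
      show "\<forall>n\<in>{1..N}. 0 \<le> P n \<and> 0 \<le> w n" using rnn Enn tpos by (simp add: P_def w_def)
    qed (use d0 dD tpos in auto)
    moreover have "objB N h g \<kappa> L D T d t P = objA N h g \<kappa> L D T d E"
      using tpos by (simp add: objAB P_def)
    ultimately show ?thesis by blast
  qed
  have "feasC N h W \<sigma>2 L D T fB 0 (\<lambda>n. if n = 1 then W * T / 2 else 0) (\<lambda>n. 0)"
    using N W T D by (simp add: feasC_def sum.delta'[of "{1..N}" 1 "\<lambda>_. W * T / 2", simplified])
  hence SCne: "SC \<noteq> {}" unfolding SC_def by blast
  have SCnn: "\<forall>x\<in>SC. 0 \<le> x" unfolding SC_def feasC_def using objA_nn by auto
  have SAnn: "\<forall>x\<in>SA. 0 \<le> x" unfolding SA_def feasA_def using objA_nn by auto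
  have SBnn: "\<forall>x\<in>SB. 0 \<le> x" unfolding SB_def feasB_def objAB
    by (auto intro!: objA_nn)
  have AC': "\<forall>x\<in>SA. \<exists>y\<in>SC. y \<le> x" unfolding SA_def SC_def using AC by fastforce
  have CA': "\<forall>y\<in>SC. \<exists>x\<in>SA. x \<le> y" unfolding SA_def SC_def using CA by fastforce
  have BC': "\<forall>x\<in>SB. \<exists>y\<in>SC. y \<le> x" unfolding SB_def SC_def objAB using BC by fastforce
  have CB': "\<forall>y\<in>SC. \<exists>x\<in>SB. x \<le> y" unfolding SB_def SC_def using CB by fastforce
  have SAne: "SA \<noteq> {}" using SCne CA' by blast
  have SBne: "SB \<noteq> {}" using SCne CB' by blast
  have 1: "Inf SA = Inf SC" by (rule Inf_dom_eq[OF SAne SCne SAnn SCnn AC' CA'])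
  have 2: "Inf SB = Inf SC" by (rule Inf_dom_eq[OF SBne SCne SBnn SCnn BC' CB'])
  show ?thesis using 1 2 unfolding valA_def valB_def valC_def SA_def SB_def SC_def by simp
qed

end
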